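(* For $i\in\{1,2\}$ let $\Sigma_{i,\mathbb{T}}$ be the linear time-varying system $x_i(t+1)=A_i(t)x_i(t)+B_i(t)u_i(t)$, $y_i(t)=C_i(t)x_i(t)+D_i(t)u_i(t)$, $t\in\mathbb{T}=\{0,\dots,T-1\}$, with $u_i(t)\in\mathbb{R}^{n_u}$, $y_i(t)\in\mathbb{R}^{n_y}$ and initial state $x_i(0)=x_{i0}$, with admissible behavior $\mathcal{B}_{i,x_{i0}}$. Suppose: (C1) for each $i$, test inputs $\mathbf{u}_i^0,\dots,\mathbf{u}_i^{n_uT}\in\mathbb{R}^{n_uT}$ are applied from $x_{i0}$ with outputs $\mathbf{y}_i^k$, where $\mathbf{u}_i^0=0$ and $\operatorname{rank}[\mathbf{u}_i^1,\dots,\mathbf{u}_i^{n_uT}]=n_uT$; with $w_i^k=\operatorname{col}(\mathbf{u}_i^k,\mathbf{y}_i^k)$ and $W_i=[w_i^1-w_i^0,\dots,w_i^{n_uT}-w_i^0]$; (C2) $H_i\in\mathbb{R}^{n_wT\times n_uT}$ is a matrix whose columns form an orthonormal basis of $\operatorname{span}(W_i)$; (C3) there exist $l_1,l_2\in\mathbb{R}^{n_uT}$ with $H_1l_1+H_2l_2=w_2^0-w_1^0$; (C4) $H_1^{\rm T}H_2=UDV^{\rm T}$ is a singular value decomposition with $U,V$ orthogonal and $D=\operatorname{diag}(s_1,\dots,s_{n_uT})$, $s_1\ge\dots\ge s_{n_uT}>0$. Let $w_g\in\mathcal{B}_{2,x_{20}}$, let $\overline{g}\in\mathbb{R}^{n_uT}$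 satisfy $w_g=H_2V\overline{g}+w_2^0$, and define $w_h=H_1UD\overline{g}+P_{\operatorname{span}(H_1)}(w_2^0-w_1^0)+w_1^0$. Then $w_h\in\mathcal{B}_{1,x_{10}}$ and $\|w_h-w_g\|=\min_{w\in\mathcal{B}_{1,x_{10}}}\|w-w_g\|$.
   Context: $n_w=n_u+n_y$. Supervectors over $\mathbb{T}$: $\mathbf{u}_i=[u_i(0)^{\rm T},\dots,u_i(T-1)^{\rm T}]^{\rm T}$, likewise $\mathbf{y}_i,\mathbf{x}_i$. The admissible behavior $\mathcal{B}_{i,x_{i0}}\subseteq\mathbb{R}^{n_wT}$ is the set of all $\operatorname{col}(\mathbf{u}_i,\mathbf{y}_i)$ for which there exists a state supervector $\mathbf{x}_i$ with $x_i(0)=x_{i0}$ such that $(\mathbf{u}_i,\mathbf{y}_i,\mathbf{x}_i)$ satisfies the system equations; $\mathbf{y}_i^k$ is the output supervector under input $\mathbf{u}_i^k$ from $x_{i0}$. $P_{\operatorname{span}(H_1)}$ denotes the orthogonal projection of $\mathbb{R}^{n_wT}$ onto $\operatorname{span}(H_1)$ (with respect to the standard inner product), and $\|\cdot\|$ is the Euclidean norm. *)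

theory Defs
  imports "Jordan_Normal_Form.DL_Rank"
begin

definition supervec :: "nat \<Rightarrow> nat \<Rightarrow> (nat \<Rightarrow> real vec) \<Rightarrow> real vec" where
  "supervec m T f = vec (m * T) (\<lambda>j. f (j div m) $ (j mod m))"

definition sample :: "nat \<Rightarrow> real vec \<Rightarrow> nat \<Rightarrow> real vec" where
  "sample m U t = vec m (\<lambda>j. U $ (t * m + j))"

fun state :: "(nat \<Rightarrow> real mat) \<Rightarrow> (nat \<Rightarrow> real mat) \<Rightarrow> real vec \<Rightarrow> (nat \<Rightarrow> real vec) \<Rightarrow> nat \<Rightarrow> real vec" where
  "state A B x0 u 0 = x0"
| "state A B x0 u (Suc t) = A t *\<^sub>v state A B x0 u t + B t *\<^sub>v u t"

definition out_sv :: "(nat \<Rightarrow> real mat) \<Rightarrow> (nat \<Rightarrow> real mat) \<Rightarrow> (nat \<Rightarrow> real mat) \<Rightarrow> (nat \<Rightarrow> real mat)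
    \<Rightarrow> nat \<Rightarrow> nat \<Rightarrow> nat \<Rightarrow> real vec \<Rightarrow> real vec \<Rightarrow> real vec" where
  "out_sv A B C D nu ny T x0 U =
     supervec ny T (\<lambda>t. C t *\<^sub>v state A B x0 (sample nu U) t + D t *\<^sub>v sample nu U t)"

definition behavior :: "(nat \<Rightarrow> real mat) \<Rightarrow> (nat \<Rightarrow> real mat) \<Rightarrow> (nat \<Rightarrow> real mat) \<Rightarrow> (nat \<Rightarrow> real mat)
    \<Rightarrow> nat \<Rightarrow> nat \<Rightarrow> nat \<Rightarrow> real vec \<Rightarrow> real vec set" where
  "behavior A B C D nu ny T x0 =
     {supervec nu T u @\<^sub>v supervec ny T y | u y.
        (\<forall>t<T. u t \<in> carrier_vec nu \<and> y t \<in> carrier_vec ny) \<and>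
        (\<exists>x. x 0 = x0 \<and>
           (\<forall>t<T. x (Suc t) = A t *\<^sub>v x t + B t *\<^sub>v u t \<and> y t = C t *\<^sub>v x t + D t *\<^sub>v u t))}"

definition vnorm :: "real vec \<Rightarrow> real" where
  "vnorm v = sqrt (v \<bullet> v)"

definition oproj :: "real vec set \<Rightarrow> real vec \<Rightarrow> real vec" where
  "oproj S v = (THE p. p \<in> S \<and> (\<forall>q\<in>S. (v - p) \<bullet> q = 0))"

definition diag_of :: "nat \<Rightarrow> (nat \<Rightarrow> real) \<Rightarrow> real mat" where
  "diag_of n s = mat n n (\<lambda>(i, j). if i = j then s i else 0)"

end

theory Submission
  imports Defs
begin


lemma idx_lt: "t < T \<Longrightarrow> j < (m::nat) \<Longrightarrow> t * m + j < m * T"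
proof -
  assume a: "t < T" "j < m"
  have "t * m + j < t * m + m" using a by simp
  also have "\<dots> = Suc t * m" by simp
  also have "\<dots> \<le> T * m" using a by (intro mult_le_mono1) simp
  finally show ?thesis by (simp add: mult.commute)
qed

lemma div_lt: "j < m * T \<Longrightarrow> j div m < (T::nat)"
  by (simp add: less_mult_imp_div_less mult.commute)

lemma mod_lt: "j < m * (T::nat) \<Longrightarrow> j mod m < m"
  by (cases "m = 0") auto

lemma sv_carrier[simp]: "supervec m T f \<in> carrier_vec (m * T)"
  by (simp add: supervec_def)

lemma sample_carrier[simp]: "sample m U t \<in> carrier_vec m"
  by (simp add: sample_def)

lemma sv_cong: "(\<And>t. t < T \<Longrightarrow> f t = g t) \<Longrightarrow> supervec m T f = supervec m T g"
  unfolding supervec_def by (intro eq_vecI) (auto simp: div_lt)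

lemma sv_add: assumes "\<And>t. t < T \<Longrightarrow> f t = g t + h t \<and> h t \<in> carrier_vec m"
  shows "supervec m T f = supervec m T g + supervec m T h"
proof (intro eq_vecI)
  fix j assume "j < dim_vec (supervec m T g + supervec m T h)"
  hence j: "j < m * T" by (simp add: supervec_def)
  have t: "j div m < T" using div_lt[OF j] .
  have k: "j mod m < m" using mod_lt[OF j] .
  from assms[OF t] have e: "f (j div m) = g (j div m) + h (j div m)" and hc: "h (j div m) \<in> carrier_vec m" by auto
  show "supervec m T f $ j = (supervec m T g + supervec m T h) $ j"
    using j k hc unfolding supervec_def by (simp add: e)
qed (simp add: supervec_def)

lemma sv_smult: assumes "\<And>t. t < T \<Longrightarrow> f t = a \<cdot>\<^sub>v g t \<and> g t \<in> carrier_vec m"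
  shows "supervec m T f = a \<cdot>\<^sub>v supervec m T g"
proof (intro eq_vecI)
  fix j assume "j < dim_vec (a \<cdot>\<^sub>v supervec m T g)"
  hence j: "j < m * T" by (simp add: supervec_def)
  have t: "j div m < T" using div_lt[OF j] .
  from assms[OF t] have e: "f (j div m) = a \<cdot>\<^sub>v g (j div m)" and gc: "g (j div m) \<in> carrier_vec m" by auto
  show "supervec m T f $ j = (a \<cdot>\<^sub>v supervec m T g) $ j"
    using j gc mod_lt[OF j] unfolding supervec_def by (simp add: e)
qed (simp add: supervec_def)

lemma sample_sv: "u t \<in> carrier_vec m \<Longrightarrow> t < T \<Longrightarrow> sample m (supervec m T u) t = u t"
  unfolding sample_def supervec_def
  by (intro eq_vecI) (auto simp: idx_lt)

lemma sv_sample: "U \<in> carrier_vec (m * T) \<Longrightarrow> supervec m T (sample m U) = U"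
  unfolding sample_def supervec_def
  by (intro eq_vecI) (auto simp: div_lt mod_lt)

lemma sample_add: "U \<in> carrier_vec (m * T) \<Longrightarrow> U' \<in> carrier_vec (m * T) \<Longrightarrow> t < T \<Longrightarrow>
  sample m (U + U') t = sample m U t + sample m U' t"
  unfolding sample_def by (intro eq_vecI) (auto simp: idx_lt)

lemma sample_smult: "U \<in> carrier_vec (m * T) \<Longrightarrow> t < T \<Longrightarrow>
  sample m (a \<cdot>\<^sub>v U) t = a \<cdot>\<^sub>v sample m U t"
  unfolding sample_def by (intro eq_vecI) (auto simp: idx_lt)

lemma smult_append: "a \<cdot>\<^sub>v (v @\<^sub>v w) = (a \<cdot>\<^sub>v v) @\<^sub>v (a \<cdot>\<^sub>v w)"
  by (intro eq_vecI) (simp_all add: index_append_vec)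

locale sys =
  fixes A B C D :: "nat \<Rightarrow> real mat" and nx nu ny T :: nat and x0 :: "real vec"
  assumes dims: "\<And>t. t < T \<Longrightarrow> A t \<in> carrier_mat nx nx \<and> B t \<in> carrier_mat nx nu \<and>
        C t \<in> carrier_mat ny nx \<and> D t \<in> carrier_mat ny nu"
    and x0c: "x0 \<in> carrier_vec nx"
begin

lemma Ac: "t < T \<Longrightarrow> A t \<in> carrier_mat nx nx" using dims by blast
lemma Bc: "t < T \<Longrightarrow> B t \<in> carrier_mat nx nu" using dims by blast
lemma Cc: "t < T \<Longrightarrow> C t \<in> carrier_mat ny nx" using dims by blast
lemma Dc: "t < T \<Longrightarrow> D t \<in> carrier_mat ny nu" using dims by blast

lemma state_carrier: "t \<le> T \<Longrightarrow> z \<in> carrier_vec nx \<Longrightarrow> state A B z u t \<in> carrier_vec nx"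
proof (induction t)
  case 0 then show ?case by simp
next
  case (Suc t)
  then have "t < T" by simp
  have "dim_vec (B t *\<^sub>v u t) = nx" using Bc[OF \<open>t<T\<close>] by simp
  then show ?case unfolding carrier_vec_def by simp
qed

lemma state_cong: "(\<And>s. s < t \<Longrightarrow> u s = u' s) \<Longrightarrow> state A B z u t = state A B z u' t"
  by (induction t) auto

definition Z where "Z t = state A B x0 (\<lambda>_. 0\<^sub>v nu) t"
definition S where "S u t = state A B (0\<^sub>v nx) u t"

lemma S_carrier: "t \<le> T \<Longrightarrow> S u t \<in> carrier_vec nx"
  unfolding S_def by (rule state_carrier) auto

lemma Z_carrier: "t \<le> T \<Longrightarrow> Z t \<in> carrier_vec nx"
  unfolding Z_def by (rule state_carrier) (auto simp: x0c)

lemma state_decomp: "t \<le> T \<Longrightarrow> (\<And>s. s < t \<Longrightarrow> u s \<in> carrier_vec nu) \<Longrightarrow>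
   state A B x0 u t = Z t + S u t"
proof (induction t)
  case 0 then show ?case using x0c by (auto simp: Z_def S_def)
next
  case (Suc t)
  then have t: "t < T" by simp
  have IH: "state A B x0 u t = Z t + S u t" using Suc by auto
  have zc: "Z t \<in> carrier_vec nx" "S u t \<in> carrier_vec nx" using Z_carrier S_carrier t by auto
  have uc: "u t \<in> carrier_vec nu" using Suc by auto
  have "state A B x0 u (Suc t) = A t *\<^sub>v (Z t + S u t) + B t *\<^sub>v u t" using IH by simp
  also have "\<dots> = (A t *\<^sub>v Z t + B t *\<^sub>v 0\<^sub>v nu) + (A t *\<^sub>v S u t + B t *\<^sub>v u t)"
    using Ac[OF t] Bc[OF t] zc uc
    by (auto simp: mult_add_distrib_mat_vec intro!: eq_vecI)
  also have "\<dots> = Z (Suc t) + S u (Suc t)" by (simp add: Z_def S_def)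
  finally show ?case .
qed

lemma S_add: "t \<le> T \<Longrightarrow> (\<And>s. s < t \<Longrightarrow> u s \<in> carrier_vec nu \<and> u' s \<in> carrier_vec nu) \<Longrightarrow>
   S (\<lambda>s. u s + u' s) t = S u t + S u' t"
proof (induction t)
  case 0 then show ?case by (auto simp: S_def)
next
  case (Suc t)
  then have t: "t < T" by simp
  have IH: "S (\<lambda>s. u s + u' s) t = S u t + S u' t" using Suc by auto
  have zc: "S u t \<in> carrier_vec nx" "S u' t \<in> carrier_vec nx" using S_carrier t by auto
  have uc: "u t \<in> carrier_vec nu" "u' t \<in> carrier_vec nu" using Suc by auto
  have "S (\<lambda>s. u s + u' s) (Suc t) = A t *\<^sub>v (S u t + S u' t) + B t *\<^sub>v (u t + u' t)" using IH by (simp add: S_def)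
  also have "\<dots> = (A t *\<^sub>v S u t + B t *\<^sub>v u t) + (A t *\<^sub>v S u' t + B t *\<^sub>v u' t)"
    using Ac[OF t] Bc[OF t] zc uc
    by (auto simp: mult_add_distrib_mat_vec intro!: eq_vecI)
  also have "\<dots> = S u (Suc t) + S u' (Suc t)" by (simp add: S_def)
  finally show ?case .
qed

lemma S_smult: "t \<le> T \<Longrightarrow> (\<And>s. s < t \<Longrightarrow> u s \<in> carrier_vec nu) \<Longrightarrow>
   S (\<lambda>s. a \<cdot>\<^sub>v u s) t = a \<cdot>\<^sub>v S u t"
proof (induction t)
  case 0 then show ?case by (auto simp: S_def)
next
  case (Suc t)
  then have t: "t < T" by simp
  have IH: "S (\<lambda>s. a \<cdot>\<^sub>v u s) t = a \<cdot>\<^sub>v S u t" using Suc by auto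
  have zc: "S u t \<in> carrier_vec nx" using S_carrier t by auto
  have uc: "u t \<in> carrier_vec nu" using Suc by auto
  have "S (\<lambda>s. a \<cdot>\<^sub>v u s) (Suc t) = A t *\<^sub>v (a \<cdot>\<^sub>v S u t) + B t *\<^sub>v (a \<cdot>\<^sub>v u t)" using IH by (simp add: S_def)
  also have "\<dots> = a \<cdot>\<^sub>v (A t *\<^sub>v S u t + B t *\<^sub>v u t)"
    using Ac[OF t] Bc[OF t] zc uc
    by (auto simp: mult_mat_vec algebra_simps intro!: eq_vecI)
  also have "\<dots> = a \<cdot>\<^sub>v S u (Suc t)" by (simp add: S_def)
  finally show ?case .
qed


definition G where "G U = supervec ny T (\<lambda>t. C t *\<^sub>v S (sample nu U) t + D t *\<^sub>v sample nu U t)"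
definition Y0 where "Y0 = supervec ny T (\<lambda>t. C t *\<^sub>v Z t)"
definition F where "F U = U @\<^sub>v out_sv A B C D nu ny T x0 U"
definition L where "L U = U @\<^sub>v G U"

lemma G_carrier: "G U \<in> carrier_vec (ny * T)" by (simp add: G_def)
lemma Y0_carrier: "Y0 \<in> carrier_vec (ny * T)" by (simp add: Y0_def)

lemma S_sample_cong: "t < T \<Longrightarrow> (\<And>s. s < T \<Longrightarrow> u s = u' s) \<Longrightarrow> S u t = S u' t"
  unfolding S_def by (rule state_cong) auto

lemma G_add: assumes U: "U \<in> carrier_vec (nu * T)" and U': "U' \<in> carrier_vec (nu * T)"
  shows "G (U + U') = G U + G U'"
  unfolding G_def
proof (rule sv_add)
  fix t assume t: "t < T"
  have e1: "S (sample nu (U + U')) t = S (\<lambda>s. sample nu U s + sample nu U' s) t"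
    using t by (intro S_sample_cong) (auto simp: sample_add[OF U U'])
  have e2: "S (\<lambda>s. sample nu U s + sample nu U' s) t = S (sample nu U) t + S (sample nu U') t"
    using t by (intro S_add) auto
  have sc: "S (sample nu U) t \<in> carrier_vec nx" "S (sample nu U') t \<in> carrier_vec nx"
    using S_carrier t by auto
  show "C t *\<^sub>v S (sample nu (U + U')) t + D t *\<^sub>v sample nu (U + U') t =
        (C t *\<^sub>v S (sample nu U) t + D t *\<^sub>v sample nu U t) +
        (C t *\<^sub>v S (sample nu U') t + D t *\<^sub>v sample nu U' t) \<and>
        C t *\<^sub>v S (sample nu U') t + D t *\<^sub>v sample nu U' t \<in> carrier_vec ny"
  proof
    have ca: "C t *\<^sub>v (S (sample nu U) t + S (sample nu U') t) = C t *\<^sub>v S (sample nu U) t + C t *\<^sub>v S (sample nu U') t"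
      using Cc[OF t] sc by (simp add: mult_add_distrib_mat_vec)
    have da: "D t *\<^sub>v (sample nu U t + sample nu U' t) = D t *\<^sub>v sample nu U t + D t *\<^sub>v sample nu U' t"
      using Dc[OF t] by (simp add: mult_add_distrib_mat_vec)
    show "C t *\<^sub>v S (sample nu (U + U')) t + D t *\<^sub>v sample nu (U + U') t =
        (C t *\<^sub>v S (sample nu U) t + D t *\<^sub>v sample nu U t) +
        (C t *\<^sub>v S (sample nu U') t + D t *\<^sub>v sample nu U' t)"
      unfolding e1 e2 sample_add[OF U U' t] ca da
      apply (rule eq_vecI)
      using Cc[OF t] Dc[OF t] by simp_all
    show "C t *\<^sub>v S (sample nu U') t + D t *\<^sub>v sample nu U' t \<in> carrier_vec ny"
      using Dc[OF t] unfolding carrier_vec_def by simp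
  qed
qed

lemma G_smult: assumes U: "U \<in> carrier_vec (nu * T)"
  shows "G (a \<cdot>\<^sub>v U) = a \<cdot>\<^sub>v G U"
  unfolding G_def
proof (rule sv_smult)
  fix t assume t: "t < T"
  have e1: "S (sample nu (a \<cdot>\<^sub>v U)) t = S (\<lambda>s. a \<cdot>\<^sub>v sample nu U s) t"
    using t by (intro S_sample_cong) (auto simp: sample_smult[OF U])
  have e2: "S (\<lambda>s. a \<cdot>\<^sub>v sample nu U s) t = a \<cdot>\<^sub>v S (sample nu U) t"
    using t by (intro S_smult) auto
  have sc: "S (sample nu U) t \<in> carrier_vec nx"
    using S_carrier t by auto
  show "C t *\<^sub>v S (sample nu (a \<cdot>\<^sub>v U)) t + D t *\<^sub>v sample nu (a \<cdot>\<^sub>v U) t =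
        a \<cdot>\<^sub>v (C t *\<^sub>v S (sample nu U) t + D t *\<^sub>v sample nu U t) \<and>
        C t *\<^sub>v S (sample nu U) t + D t *\<^sub>v sample nu U t \<in> carrier_vec ny"
  proof
    have ca: "C t *\<^sub>v (a \<cdot>\<^sub>v S (sample nu U) t) = a \<cdot>\<^sub>v (C t *\<^sub>v S (sample nu U) t)"
      using Cc[OF t] sc by (simp add: mult_mat_vec)
    have da: "D t *\<^sub>v (a \<cdot>\<^sub>v sample nu U t) = a \<cdot>\<^sub>v (D t *\<^sub>v sample nu U t)"
      using Dc[OF t] by (simp add: mult_mat_vec)
    show "C t *\<^sub>v S (sample nu (a \<cdot>\<^sub>v U)) t + D t *\<^sub>v sample nu (a \<cdot>\<^sub>v U) t =
        a \<cdot>\<^sub>v (C t *\<^sub>v S (sample nu U) t + D t *\<^sub>v sample nu U t)"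
      unfolding e1 e2 sample_smult[OF U t] ca da
      apply (rule eq_vecI)
      using Cc[OF t] Dc[OF t] by (simp_all add: algebra_simps)
    show "C t *\<^sub>v S (sample nu U) t + D t *\<^sub>v sample nu U t \<in> carrier_vec ny"
      using Dc[OF t] unfolding carrier_vec_def by simp
  qed
qed

lemma G_zero: "G (0\<^sub>v (nu * T)) = 0\<^sub>v (ny * T)"
proof -
  have z: "0 \<cdot>\<^sub>v 0\<^sub>v (nu * T) = (0\<^sub>v (nu * T) :: real vec)" by (intro eq_vecI) simp_all
  have "G (0\<^sub>v (nu * T)) = G (0 \<cdot>\<^sub>v 0\<^sub>v (nu * T))" by (simp only: z)
  also have "\<dots> = 0 \<cdot>\<^sub>v G (0\<^sub>v (nu * T))" by (rule G_smult) simp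
  also have "\<dots> = 0\<^sub>v (ny * T)"
  proof -
    have "dim_vec (G (0\<^sub>v (nu * T))) = ny * T" using G_carrier[of "0\<^sub>v (nu * T)"] by simp
    then show ?thesis by (intro eq_vecI) simp_all
  qed
  finally show ?thesis .
qed

lemma out_decomp: assumes U: "U \<in> carrier_vec (nu * T)"
  shows "out_sv A B C D nu ny T x0 U = Y0 + G U"
  unfolding out_sv_def Y0_def G_def
proof (rule sv_add)
  fix t assume t: "t < T"
  have e: "state A B x0 (sample nu U) t = Z t + S (sample nu U) t"
    using t by (intro state_decomp) auto
  have sc: "S (sample nu U) t \<in> carrier_vec nx" "Z t \<in> carrier_vec nx"
    using S_carrier Z_carrier t by auto
  show "C t *\<^sub>v state A B x0 (sample nu U) t + D t *\<^sub>v sample nu U t =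
    C t *\<^sub>v Z t + (C t *\<^sub>v S (sample nu U) t + D t *\<^sub>v sample nu U t) \<and>
    C t *\<^sub>v S (sample nu U) t + D t *\<^sub>v sample nu U t \<in> carrier_vec ny"
  proof
    have ca: "C t *\<^sub>v (Z t + S (sample nu U) t) = C t *\<^sub>v Z t + C t *\<^sub>v S (sample nu U) t"
      using Cc[OF t] sc by (simp add: mult_add_distrib_mat_vec)
    show "C t *\<^sub>v state A B x0 (sample nu U) t + D t *\<^sub>v sample nu U t =
      C t *\<^sub>v Z t + (C t *\<^sub>v S (sample nu U) t + D t *\<^sub>v sample nu U t)"
      unfolding e ca
      apply (rule eq_vecI)
      using Cc[OF t] Dc[OF t] by simp_all
    show "C t *\<^sub>v S (sample nu U) t + D t *\<^sub>v sample nu U t \<in> carrier_vec ny"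
      using Dc[OF t] unfolding carrier_vec_def by simp
  qed
qed

lemma L_carrier: "U \<in> carrier_vec (nu * T) \<Longrightarrow> L U \<in> carrier_vec (nu * T + ny * T)"
  unfolding L_def using G_carrier by auto

lemma L_add: "U \<in> carrier_vec (nu * T) \<Longrightarrow> U' \<in> carrier_vec (nu * T) \<Longrightarrow> L (U + U') = L U + L U'"
  unfolding L_def by (simp only: G_add append_vec_add[OF _ _ G_carrier G_carrier])

lemma L_smult: "U \<in> carrier_vec (nu * T) \<Longrightarrow> L (a \<cdot>\<^sub>v U) = a \<cdot>\<^sub>v L U"
  unfolding L_def by (simp add: G_smult smult_append)

lemma F_eq: assumes U: "U \<in> carrier_vec (nu * T)"
  shows "F U = F (0\<^sub>v (nu * T)) + L U"
proof -
  have "F (0\<^sub>v (nu * T)) + L U = (0\<^sub>v (nu * T) @\<^sub>v Y0) + (U @\<^sub>v G U)"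
    unfolding F_def L_def by (simp add: out_decomp G_zero Y0_carrier)
  also have "\<dots> = U @\<^sub>v (Y0 + G U)"
    using U by (simp only: append_vec_add[OF zero_carrier_vec U Y0_carrier G_carrier] left_zero_vec)
  also have "\<dots> = F U" unfolding F_def by (simp add: out_decomp U)
  finally show ?thesis by simp
qed

lemma F_in: assumes U: "U \<in> carrier_vec (nu * T)"
  shows "F U \<in> behavior A B C D nu ny T x0"
proof -
  let ?u = "sample nu U"
  let ?y = "\<lambda>t. C t *\<^sub>v state A B x0 ?u t + D t *\<^sub>v ?u t"
  have "F U = supervec nu T ?u @\<^sub>v supervec ny T ?y"
    unfolding F_def out_sv_def using sv_sample[OF U] by simp
  moreover have "\<forall>t<T. ?u t \<in> carrier_vec nu \<and> ?y t \<in> carrier_vec ny"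
  proof (intro allI impI)
    fix t assume "t < T"
    then have "D t \<in> carrier_mat ny nu" by (rule Dc)
    then show "?u t \<in> carrier_vec nu \<and> ?y t \<in> carrier_vec ny" unfolding carrier_vec_def by simp
  qed
  moreover have "\<exists>x. x 0 = x0 \<and> (\<forall>t<T. x (Suc t) = A t *\<^sub>v x t + B t *\<^sub>v ?u t \<and> ?y t = C t *\<^sub>v x t + D t *\<^sub>v ?u t)"
    by (rule exI[of _ "state A B x0 ?u"]) simp
  ultimately show ?thesis unfolding behavior_def by blast
qed

lemma in_F: assumes w: "w \<in> behavior A B C D nu ny T x0"
  shows "\<exists>U \<in> carrier_vec (nu * T). w = F U"
proof -
  from w obtain u y x where wd: "w = supervec nu T u @\<^sub>v supervec ny T y"
    and uy: "\<forall>t<T. u t \<in> carrier_vec nu \<and> y t \<in> carrier_vec ny"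
    and x0: "x 0 = x0"
    and xe: "\<forall>t<T. x (Suc t) = A t *\<^sub>v x t + B t *\<^sub>v u t \<and> y t = C t *\<^sub>v x t + D t *\<^sub>v u t"
    unfolding behavior_def by blast
  let ?U = "supervec nu T u"
  have su: "\<And>t. t < T \<Longrightarrow> sample nu ?U t = u t" using uy sample_sv by auto
  have xs: "t \<le> T \<Longrightarrow> x t = state A B x0 (sample nu ?U) t" for t
  proof (induction t)
    case 0 then show ?case using x0 by simp
  next
    case (Suc t) then show ?case using xe su by auto
  qed
  have "supervec ny T y = out_sv A B C D nu ny T x0 ?U"
    unfolding out_sv_def by (rule sv_cong) (auto simp: xe su xs)
  then have "w = F ?U" unfolding F_def wd by simp
  then show ?thesis by auto
qed

end


lemma lin_mat:
  fixes Lf :: "real vec \<Rightarrow> real vec"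
  assumes car: "\<And>x. x \<in> carrier_vec n \<Longrightarrow> Lf x \<in> carrier_vec m"
  and add: "\<And>x y. x \<in> carrier_vec n \<Longrightarrow> y \<in> carrier_vec n \<Longrightarrow> Lf (x + y) = Lf x + Lf y"
  and sm: "\<And>a x. x \<in> carrier_vec n \<Longrightarrow> Lf (a \<cdot>\<^sub>v x) = a \<cdot>\<^sub>v Lf x"
  shows "\<exists>M \<in> carrier_mat m n. \<forall>x \<in> carrier_vec n. Lf x = M *\<^sub>v x"
proof -
  define M where "M = mat m n (\<lambda>(i,j). Lf (unit_vec n j) $ i)"
  have ec: "\<And>j. Lf (unit_vec n j) \<in> carrier_vec m" using car by simp
  have z: "Lf (0\<^sub>v n) = 0\<^sub>v m"
  proof -
    have z1: "0 \<cdot>\<^sub>v 0\<^sub>v n = (0\<^sub>v n :: real vec)" by (intro eq_vecI) simp_all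
    have "Lf (0\<^sub>v n) = Lf (0 \<cdot>\<^sub>v 0\<^sub>v n)" by (simp only: z1)
    also have "\<dots> = 0 \<cdot>\<^sub>v Lf (0\<^sub>v n)" by (rule sm) simp
    also have "\<dots> = 0\<^sub>v m"
    proof -
      have "dim_vec (Lf (0\<^sub>v n)) = m" using car[of "0\<^sub>v n"] by simp
      then show ?thesis by (intro eq_vecI) simp_all
    qed
    finally show ?thesis .
  qed
  have main: "k \<le> n \<Longrightarrow> Lf (vec n (\<lambda>i. if i < k then x $ i else 0)) =
      vec m (\<lambda>i. \<Sum>j<k. x $ j * Lf (unit_vec n j) $ i)" for k x
  proof (induction k)
    case 0
    have "vec n (\<lambda>i. if i < 0 then x $ i else 0) = 0\<^sub>v n" by (intro eq_vecI) simp_all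
    then show ?case using z by (auto intro!: eq_vecI)
  next
    case (Suc k)
    then have k: "k < n" by simp
    have dec: "vec n (\<lambda>i. if i < Suc k then x $ i else 0) =
       vec n (\<lambda>i. if i < k then x $ i else 0) + x $ k \<cdot>\<^sub>v unit_vec n k"
      by (intro eq_vecI) (auto simp: unit_vec_def less_Suc_eq)
    have "Lf (vec n (\<lambda>i. if i < Suc k then x $ i else 0)) =
       Lf (vec n (\<lambda>i. if i < k then x $ i else 0)) + x $ k \<cdot>\<^sub>v Lf (unit_vec n k)"
      unfolding dec by (simp add: add sm)
    also have "\<dots> = vec m (\<lambda>i. \<Sum>j<Suc k. x $ j * Lf (unit_vec n j) $ i)"
      unfolding Suc.IH[OF Suc_leD[OF Suc.prems]] using ec[of k]
      by (intro eq_vecI) auto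
    finally show ?case .
  qed
  have "\<forall>x \<in> carrier_vec n. Lf x = M *\<^sub>v x"
  proof
    fix x :: "real vec" assume x: "x \<in> carrier_vec n"
    have "x = vec n (\<lambda>i. if i < n then x $ i else 0)" using x by (intro eq_vecI) auto
    then have "Lf x = vec m (\<lambda>i. \<Sum>j<n. x $ j * Lf (unit_vec n j) $ i)" using main[of n x] by simp
    also have "\<dots> = M *\<^sub>v x"
      using x by (intro eq_vecI) (auto simp: M_def scalar_prod_def lessThan_atLeast0 mult.commute)
    finally show "Lf x = M *\<^sub>v x" .
  qed
  moreover have "M \<in> carrier_mat m n" by (simp add: M_def)
  ultimately show ?thesis by blast
qed

lemma sp_self_ge0: "(v::real vec) \<bullet> v \<ge> 0"
  by (simp add: scalar_prod_def sum_nonneg)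

lemma sp_self_eq0: "(v::real vec) \<bullet> v = 0 \<Longrightarrow> v = 0\<^sub>v (dim_vec v)"
proof -
  assume "v \<bullet> v = 0"
  then have "(\<Sum>i\<in>{0..<dim_vec v}. v $ i * v $ i) = 0" by (simp add: scalar_prod_def)
  then have "\<forall>i\<in>{0..<dim_vec v}. v $ i * v $ i = 0"
    by (subst (asm) sum_nonneg_eq_0_iff) auto
  then show ?thesis by (intro eq_vecI) auto
qed

theorem theorem2:
  fixes A B C D :: "nat \<Rightarrow> nat \<Rightarrow> real mat"
    and nx :: "nat \<Rightarrow> nat" and nu ny T :: nat
    and x0 :: "nat \<Rightarrow> real vec"
    and uk :: "nat \<Rightarrow> nat \<Rightarrow> real vec"
    and wk :: "nat \<Rightarrow> nat \<Rightarrow> real vec"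
    and W H :: "nat \<Rightarrow> real mat"
    and U V Dm :: "real mat" and s :: "nat \<Rightarrow> real"
    and wg gbar wh :: "real vec"
  defines "N \<equiv> nu * T"
    and "nw \<equiv> nu + ny"
  assumes sys_dims: "\<And>i t. i \<in> {1, 2} \<Longrightarrow> t < T \<Longrightarrow>
        A i t \<in> carrier_mat (nx i) (nx i) \<and> B i t \<in> carrier_mat (nx i) nu \<and>
        C i t \<in> carrier_mat ny (nx i) \<and> D i t \<in> carrier_mat ny nu"
    and x0_dim: "\<And>i. i \<in> {1, 2} \<Longrightarrow> x0 i \<in> carrier_vec (nx i)"
    \<comment> \<open>(C1)\<close>
    and uk_dim: "\<And>i k. i \<in> {1, 2} \<Longrightarrow> k \<le> N \<Longrightarrow> uk i k \<in> carrier_vec N"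
    and uk0: "\<And>i. i \<in> {1, 2} \<Longrightarrow> uk i 0 = 0\<^sub>v N"
    and uk_rank: "\<And>i. i \<in> {1, 2} \<Longrightarrow>
        vec_space.rank N (mat_of_cols N (map (\<lambda>k. uk i k) [1..<N + 1])) = N"
    and wk_def: "\<And>i k. i \<in> {1, 2} \<Longrightarrow> k \<le> N \<Longrightarrow>
        wk i k = uk i k @\<^sub>v out_sv (A i) (B i) (C i) (D i) nu ny T (x0 i) (uk i k)"
    and W_def: "\<And>i. i \<in> {1, 2} \<Longrightarrow>
        W i = mat_of_cols (nw * T) (map (\<lambda>k. wk i k - wk i 0) [1..<N + 1])"
    \<comment> \<open>(C2)\<close>
    and H_dim: "\<And>i. i \<in> {1, 2} \<Longrightarrow> H i \<in> carrier_mat (nw * T) N"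
    and H_orth: "\<And>i. i \<in> {1, 2} \<Longrightarrow> (H i)\<^sup>T * H i = 1\<^sub>m N"
    and H_span: "\<And>i. i \<in> {1, 2} \<Longrightarrow>
        vec_space.col_space (nw * T) (H i) = vec_space.col_space (nw * T) (W i)"
    \<comment> \<open>(C3)\<close>
    and C3: "\<exists>l1 \<in> carrier_vec N. \<exists>l2 \<in> carrier_vec N.
        H 1 *\<^sub>v l1 + H 2 *\<^sub>v l2 = wk 2 0 - wk 1 0"
    \<comment> \<open>(C4)\<close>
    and U_dim: "U \<in> carrier_mat N N" and V_dim: "V \<in> carrier_mat N N"
    and U_orth: "U\<^sup>T * U = 1\<^sub>m N \<and> U * U\<^sup>T = 1\<^sub>m N"
    and V_orth: "V\<^sup>T * V = 1\<^sub>m N \<and> V * V\<^sup>T = 1\<^sub>m N"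
    and Dm_def: "Dm = diag_of N s"
    and s_pos: "\<And>j. j < N \<Longrightarrow> s j > 0"
    and s_mono: "\<And>j k. j \<le> k \<Longrightarrow> k < N \<Longrightarrow> s k \<le> s j"
    and svd: "(H 1)\<^sup>T * H 2 = U * Dm * V\<^sup>T"
    \<comment> \<open>the data of the theorem\<close>
    and wg_in: "wg \<in> behavior (A 2) (B 2) (C 2) (D 2) nu ny T (x0 2)"
    and gbar_dim: "gbar \<in> carrier_vec N"
    and wg_eq: "wg = H 2 *\<^sub>v (V *\<^sub>v gbar) + wk 2 0"
    and wh_def: "wh = H 1 *\<^sub>v (U *\<^sub>v (Dm *\<^sub>v gbar))
        + oproj (vec_space.col_space (nw * T) (H 1)) (wk 2 0 - wk 1 0) + wk 1 0"
  shows "wh \<in> behavior (A 1) (B 1) (C 1) (D 1) nu ny T (x0 1) \<and>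
    (\<forall>w \<in> behavior (A 1) (B 1) (C 1) (D 1) nu ny T (x0 1). vnorm (wh - wg) \<le> vnorm (w - wg))"
proof -
  have Ne: "N = nu * T" using N_def by simp
  define m where "m = nw * T"
  have me: "m = N + ny * T" unfolding m_def nw_def N_def by (simp add: algebra_simps)
  interpret s1: sys "A 1" "B 1" "C 1" "D 1" "nx 1" nu ny T "x0 1"
    using sys_dims[of 1] x0_dim[of 1] by unfold_locales auto
  have H1c: "H 1 \<in> carrier_mat m N" using H_dim[of 1] m_def by simp
  have H2c: "H 2 \<in> carrier_mat m N" using H_dim[of 2] m_def by simp
  have ukc: "\<And>(i::nat) k. i \<in> {1,2} \<Longrightarrow> k \<le> N \<Longrightarrow> uk i k \<in> carrier_vec N" using uk_dim by blast
  have wkc: "\<And>(i::nat) k. i \<in> {1,2} \<Longrightarrow> k \<le> N \<Longrightarrow> wk i k \<in> carrier_vec m"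
  proof -
    fix i k :: nat assume i: "i \<in> {1,2}" and k: "k \<le> N"
    have "dim_vec (out_sv (A i) (B i) (C i) (D i) nu ny T (x0 i) (uk i k)) = ny * T"
      unfolding out_sv_def by (simp add: supervec_def)
    moreover have "dim_vec (uk i k) = N" using ukc[OF i k] by simp
    ultimately show "wk i k \<in> carrier_vec m" unfolding wk_def[OF i k] me by (intro carrier_vecI) simp
  qed
  have wkF: "\<And>k. k \<le> N \<Longrightarrow> wk 1 k = s1.F (uk 1 k)"
    using wk_def unfolding s1.F_def by simp
  have wk10: "wk 1 0 = s1.F (0\<^sub>v N)" using wkF[of 0] uk0[of 1] by simp
  obtain M where Mc: "M \<in> carrier_mat (nu * T + ny * T) (nu * T)"
    and Lmat: "\<forall>x \<in> carrier_vec (nu * T). s1.L x = M *\<^sub>v x"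
    using lin_mat[of "nu * T" s1.L "nu * T + ny * T"] s1.L_carrier s1.L_add s1.L_smult by blast
  have Mc': "M \<in> carrier_mat m N" using Mc me Ne by simp
  have Fe: "\<And>U. U \<in> carrier_vec N \<Longrightarrow> s1.F U = wk 1 0 + M *\<^sub>v U"
  proof -
    fix U :: "real vec" assume U: "U \<in> carrier_vec N"
    then have U': "U \<in> carrier_vec (nu * T)" using Ne by simp
    have "s1.L U = M *\<^sub>v U" using Lmat U' by blast
    moreover have "wk 1 0 = s1.F (0\<^sub>v (nu * T))" using wk10 Ne by simp
    ultimately show "s1.F U = wk 1 0 + M *\<^sub>v U" using s1.F_eq[OF U'] by simp
  qed
  define Um where "Um = mat_of_cols N (map (uk 1) [1..<N + 1])"
  have Umc: "Um \<in> carrier_mat N N" unfolding Um_def by (intro carrier_matI) (simp_all del: upt_Suc)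
  have W1: "W 1 = M * Um"
  proof (rule eq_matI)
    show "dim_row (W 1) = dim_row (M * Um)" using W_def[of 1] Mc' m_def by (simp del: upt_Suc)
    show "dim_col (W 1) = dim_col (M * Um)" using W_def[of 1] Umc by (simp del: upt_Suc)
    fix i k assume i: "i < dim_row (M * Um)" and k: "k < dim_col (M * Um)"
    have i': "i < m" and k': "k < N" using i k Mc' Umc by auto
    have uc: "uk 1 (Suc k) \<in> carrier_vec N" using ukc[of 1 "Suc k"] k' by simp
    have "W 1 $$ (i, k) = (wk 1 (Suc k) - wk 1 0) $ i"
      using W_def[of 1] i' k' m_def by (simp add: mat_of_cols_index del: upt_Suc)
    also have "\<dots> = (M *\<^sub>v uk 1 (Suc k)) $ i"
      using wkF[of "Suc k"] k' Fe[OF uc] wkc[of 1 0] Mc' i' by simp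
    also have "\<dots> = (M * Um) $$ (i, k)"
      using i' k' Mc' Umc uc unfolding Um_def by (simp add: col_mat_of_cols del: upt_Suc)
    finally show "W 1 $$ (i, k) = (M * Um) $$ (i, k)" .
  qed
  have "det Um \<noteq> 0" using vec_space.det_rank_iff[OF Umc] uk_rank[of 1] Um_def by simp
  from det_non_zero_imp_unit[OF Umc this, unfolded Units_def, of "()"]
  obtain Bi where Bic: "Bi \<in> carrier_mat N N" and UB: "Um * Bi = 1\<^sub>m N"
    by (auto simp: ring_mat_def)
  have W1c: "W 1 \<in> carrier_mat m N" using W1 Mc' Umc by simp
  have csH: "vec_space.col_space m (H 1) = {y \<in> carrier_vec m. \<exists>x\<in>carrier_vec N. H 1 *\<^sub>v x = y}"
    using vec_space.col_space_eq[OF H1c] H1c by simp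
  have csW: "vec_space.col_space m (W 1) = {y \<in> carrier_vec m. \<exists>x\<in>carrier_vec N. W 1 *\<^sub>v x = y}"
    using vec_space.col_space_eq[OF W1c] W1c by simp
  have HW: "vec_space.col_space m (H 1) = vec_space.col_space m (W 1)" using H_span[of 1] m_def by simp
  have K1: "\<And>c. c \<in> carrier_vec N \<Longrightarrow> \<exists>U\<in>carrier_vec N. H 1 *\<^sub>v c = M *\<^sub>v U"
  proof -
    fix c :: "real vec" assume c: "c \<in> carrier_vec N"
    have "H 1 *\<^sub>v c \<in> vec_space.col_space m (H 1)" unfolding csH using c H1c by auto
    then obtain x where x: "x \<in> carrier_vec N" "W 1 *\<^sub>v x = H 1 *\<^sub>v c" unfolding HW csW by auto
    have "W 1 *\<^sub>v x = M *\<^sub>v (Um *\<^sub>v x)" unfolding W1 using Mc' Umc x by (simp add: assoc_mult_mat_vec)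
    then show "\<exists>U\<in>carrier_vec N. H 1 *\<^sub>v c = M *\<^sub>v U" using x Umc by (intro bexI[of _ "Um *\<^sub>v x"]) auto
  qed
  have K2: "\<And>U. U \<in> carrier_vec N \<Longrightarrow> \<exists>c\<in>carrier_vec N. M *\<^sub>v U = H 1 *\<^sub>v c"
  proof -
    fix U :: "real vec" assume U: "U \<in> carrier_vec N"
    have "M *\<^sub>v U = M *\<^sub>v ((Um * Bi) *\<^sub>v U)" using UB U by simp
    also have "\<dots> = W 1 *\<^sub>v (Bi *\<^sub>v U)" unfolding W1 using Mc' Umc Bic U by (simp add: assoc_mult_mat_vec)
    finally have e: "M *\<^sub>v U = W 1 *\<^sub>v (Bi *\<^sub>v U)" .
    have "M *\<^sub>v U \<in> vec_space.col_space m (W 1)" unfolding csW e using W1c Bic U by auto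
    then obtain x where x: "x \<in> carrier_vec N" "H 1 *\<^sub>v x = M *\<^sub>v U" unfolding HW[symmetric] csH by blast
    show "\<exists>c\<in>carrier_vec N. M *\<^sub>v U = H 1 *\<^sub>v c" using x(1) x(2)[symmetric] by blast
  qed
  have Bsup: "\<And>c. c \<in> carrier_vec N \<Longrightarrow> wk 1 0 + H 1 *\<^sub>v c \<in> behavior (A 1) (B 1) (C 1) (D 1) nu ny T (x0 1)"
  proof -
    fix c :: "real vec" assume c: "c \<in> carrier_vec N"
    obtain U where U: "U \<in> carrier_vec N" "H 1 *\<^sub>v c = M *\<^sub>v U" using K1[OF c] by blast
    have "wk 1 0 + H 1 *\<^sub>v c = s1.F U" using Fe[OF U(1)] U(2) by simp
    then show "wk 1 0 + H 1 *\<^sub>v c \<in> behavior (A 1) (B 1) (C 1) (D 1) nu ny T (x0 1)"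
      using s1.F_in U(1) Ne by simp
  qed
  have Bsub: "\<And>w. w \<in> behavior (A 1) (B 1) (C 1) (D 1) nu ny T (x0 1) \<Longrightarrow> \<exists>c\<in>carrier_vec N. w = wk 1 0 + H 1 *\<^sub>v c"
  proof -
    fix w assume "w \<in> behavior (A 1) (B 1) (C 1) (D 1) nu ny T (x0 1)"
    then obtain U where U: "U \<in> carrier_vec N" "w = s1.F U" using s1.in_F Ne by auto
    obtain c where c: "c \<in> carrier_vec N" "M *\<^sub>v U = H 1 *\<^sub>v c" using K2[OF U(1)] by blast
    show "\<exists>c\<in>carrier_vec N. w = wk 1 0 + H 1 *\<^sub>v c" using U c Fe by auto
  qed
  have orth: "\<And>y c. y \<in> carrier_vec m \<Longrightarrow> c \<in> carrier_vec N \<Longrightarrow> (H 1)\<^sup>T *\<^sub>v y = 0\<^sub>v N \<Longrightarrow> y \<bullet> (H 1 *\<^sub>v c) = 0"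
  proof -
    fix y c :: "real vec" assume y: "y \<in> carrier_vec m" and c: "c \<in> carrier_vec N" and z: "(H 1)\<^sup>T *\<^sub>v y = 0\<^sub>v N"
    have "y \<bullet> (H 1 *\<^sub>v c) = ((H 1)\<^sup>T *\<^sub>v y) \<bullet> c" using transpose_vec_mult_scalar[OF H1c c y] by simp
    then show "y \<bullet> (H 1 *\<^sub>v c) = 0" using z c by simp
  qed
  have HtH: "\<And>x. x \<in> carrier_vec N \<Longrightarrow> (H 1)\<^sup>T *\<^sub>v (H 1 *\<^sub>v x) = x"
  proof -
    fix x :: "real vec" assume x: "x \<in> carrier_vec N"
    have "(H 1)\<^sup>T *\<^sub>v (H 1 *\<^sub>v x) = ((H 1)\<^sup>T * H 1) *\<^sub>v x"
      using H1c x by (simp add: assoc_mult_mat_vec)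
    then show "(H 1)\<^sup>T *\<^sub>v (H 1 *\<^sub>v x) = x" using H_orth[of 1] x by simp
  qed
  define v where "v = wk 2 0 - wk 1 0"
  have vc: "v \<in> carrier_vec m" unfolding v_def using wkc[of 2 0] wkc[of 1 0] by simp
  define a0 where "a0 = (H 1)\<^sup>T *\<^sub>v v"
  have a0c: "a0 \<in> carrier_vec N" unfolding a0_def using H1c vc by simp
  define p where "p = H 1 *\<^sub>v a0"
  have pc: "p \<in> carrier_vec m" unfolding p_def using H1c a0c by simp
  have Htvp: "(H 1)\<^sup>T *\<^sub>v (v - p) = 0\<^sub>v N"
  proof -
    have "(H 1)\<^sup>T *\<^sub>v (v - p) = (H 1)\<^sup>T *\<^sub>v v - (H 1)\<^sup>T *\<^sub>v p"
      using H1c vc pc by (simp add: mult_minus_distrib_mat_vec)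
    also have "\<dots> = a0 - a0" unfolding p_def HtH[OF a0c] a0_def[symmetric] ..
    also have "\<dots> = 0\<^sub>v N" using a0c by simp
    finally show ?thesis .
  qed
  have proj: "oproj (vec_space.col_space (nw * T) (H 1)) v = p"
    unfolding oproj_def m_def[symmetric]
  proof (rule the_equality)
    show "p \<in> vec_space.col_space m (H 1) \<and> (\<forall>q\<in>vec_space.col_space m (H 1). (v - p) \<bullet> q = 0)"
      unfolding csH using pc a0c p_def orth[OF _ _ Htvp] vc pc by auto
  next
    fix p' assume p': "p' \<in> vec_space.col_space m (H 1) \<and> (\<forall>q\<in>vec_space.col_space m (H 1). (v - p') \<bullet> q = 0)"
    then obtain c' where c': "c' \<in> carrier_vec N" "p' = H 1 *\<^sub>v c'" and p'c: "p' \<in> carrier_vec m" unfolding csH by auto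
    define d where "d = p - p'"
    have dc: "d \<in> carrier_vec m" unfolding d_def using pc p'c by simp
    have d_eq: "d = H 1 *\<^sub>v (a0 - c')" unfolding d_def p_def c'(2)
      using H1c a0c c' by (simp add: mult_minus_distrib_mat_vec)
    have dS: "d \<in> vec_space.col_space m (H 1)" unfolding csH d_eq using H1c a0c c' by auto
    have o1: "(v - p') \<bullet> d = 0" using p' dS by blast
    have o2: "(v - p) \<bullet> d = 0" unfolding d_eq using orth[OF _ _ Htvp] vc pc a0c c' by simp
    have "d \<bullet> d = (v - p') \<bullet> d - (v - p) \<bullet> d"
      unfolding d_def using vc pc p'c
      by (simp add: scalar_prod_def sum_subtractf[symmetric] algebra_simps)
    then have "d \<bullet> d = 0" using o1 o2 by simp
    then have "d = 0\<^sub>v m" using sp_self_eq0[of d] dc by simp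
    then have h: "p - p' = 0\<^sub>v m" unfolding d_def .
    show "p' = p"
    proof (rule eq_vecI)
      fix i assume "i < dim_vec p"
      then have i: "i < m" using pc by simp
      then have "(p - p') $ i = 0" using h by simp
      then show "p' $ i = p $ i" using i pc p'c by simp
    next
      show "dim_vec p' = dim_vec p" using pc p'c by simp
    qed
  qed
  have gc: "gbar \<in> carrier_vec N" by (rule gbar_dim)
  define b where "b = U *\<^sub>v (Dm *\<^sub>v gbar)"
  have Dmc: "Dm \<in> carrier_mat N N" unfolding Dm_def diag_of_def by simp
  have bc: "b \<in> carrier_vec N" unfolding b_def using U_dim Dmc gc by simp
  define a where "a = b + a0"
  have ac: "a \<in> carrier_vec N" unfolding a_def using bc a0c by simp
  have wh_eq: "wh = wk 1 0 + H 1 *\<^sub>v a"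
  proof -
    have "H 1 *\<^sub>v a = H 1 *\<^sub>v b + p" unfolding a_def p_def using H1c bc a0c
      by (simp add: mult_add_distrib_mat_vec)
    moreover have proj': "oproj (vec_space.col_space (nw * T) (H 1)) (wk 2 0 - wk 1 0) = p"
      using proj unfolding v_def .
    have e1: "wh = H 1 *\<^sub>v b + p + wk 1 0" unfolding wh_def b_def[symmetric] proj' ..
    ultimately show ?thesis unfolding e1
      using wkc[of 1 0] H1c bc pc by (intro eq_vecI) auto
  qed
  have wh_in: "wh \<in> behavior (A 1) (B 1) (C 1) (D 1) nu ny T (x0 1)" using Bsup[OF ac] wh_eq by simp
  define Vg where "Vg = V *\<^sub>v gbar"
  have Vgc: "Vg \<in> carrier_vec N" unfolding Vg_def using V_dim gc by simp
  define r where "r = wh - wg"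
  have r_eq: "r = H 1 *\<^sub>v a - (v + H 2 *\<^sub>v Vg)"
    unfolding r_def wh_eq wg_eq Vg_def[symmetric] v_def
    using wkc[of 1 0] wkc[of 2 0] H1c H2c ac Vgc by (intro eq_vecI) auto
  have rc: "r \<in> carrier_vec m" unfolding r_eq using H1c H2c ac Vgc vc by simp
  have H12: "(H 1)\<^sup>T *\<^sub>v (H 2 *\<^sub>v Vg) = b"
  proof -
    have "(H 1)\<^sup>T *\<^sub>v (H 2 *\<^sub>v Vg) = ((H 1)\<^sup>T * H 2) *\<^sub>v Vg"
      using H1c H2c Vgc by (simp add: assoc_mult_mat_vec)
    also have "\<dots> = (U * Dm * V\<^sup>T) *\<^sub>v (V *\<^sub>v gbar)" unfolding svd Vg_def ..
    also have "\<dots> = (U * Dm) *\<^sub>v (V\<^sup>T *\<^sub>v (V *\<^sub>v gbar))"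
      by (rule assoc_mult_mat_vec) (use U_dim Dmc V_dim gc in auto)
    also have "V\<^sup>T *\<^sub>v (V *\<^sub>v gbar) = (V\<^sup>T * V) *\<^sub>v gbar"
      using V_dim gc by (simp add: assoc_mult_mat_vec)
    also have "\<dots> = gbar" using V_orth gc by simp
    also have "(U * Dm) *\<^sub>v gbar = b" unfolding b_def using U_dim Dmc gc by (simp add: assoc_mult_mat_vec)
    finally show ?thesis .
  qed
  have Htr: "(H 1)\<^sup>T *\<^sub>v r = 0\<^sub>v N"
  proof -
    have "(H 1)\<^sup>T *\<^sub>v r = (H 1)\<^sup>T *\<^sub>v (H 1 *\<^sub>v a) - ((H 1)\<^sup>T *\<^sub>v v + (H 1)\<^sup>T *\<^sub>v (H 2 *\<^sub>v Vg))"
      unfolding r_eq using H1c H2c ac Vgc vc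
      by (simp add: mult_minus_distrib_mat_vec mult_add_distrib_mat_vec)
    also have "\<dots> = a - (a0 + b)" unfolding HtH[OF ac] H12 a0_def[symmetric] ..
    also have "\<dots> = 0\<^sub>v N" unfolding a_def using bc a0c by (intro eq_vecI) auto
    finally show ?thesis .
  qed
  have minimal: "\<forall>w \<in> behavior (A 1) (B 1) (C 1) (D 1) nu ny T (x0 1). vnorm (wh - wg) \<le> vnorm (w - wg)"
  proof
    fix w assume "w \<in> behavior (A 1) (B 1) (C 1) (D 1) nu ny T (x0 1)"
    then obtain c where c: "c \<in> carrier_vec N" "w = wk 1 0 + H 1 *\<^sub>v c" using Bsub by blast
    define q where "q = H 1 *\<^sub>v (c - a)"
    have qc: "q \<in> carrier_vec m" unfolding q_def using H1c c ac by simp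
    have "w - wg = r + q"
    proof -
      have "q = H 1 *\<^sub>v c - H 1 *\<^sub>v a" unfolding q_def using H1c c ac by (simp add: mult_minus_distrib_mat_vec)
      then show ?thesis unfolding r_def c(2) wh_eq
        using wkc[of 1 0] H1c c ac wg_eq wkc[of 2 0] H2c Vgc Vg_def by (intro eq_vecI) auto
    qed
    moreover have rq: "r \<bullet> q = 0" unfolding q_def using orth[OF rc _ Htr] c ac by simp
    have "(r + q) \<bullet> (r + q) = r \<bullet> r + 2 * (r \<bullet> q) + q \<bullet> q"
      using rc qc by (simp add: add_scalar_prod_distrib scalar_prod_add_distrib comm_scalar_prod[of q m r])
    then have "(r + q) \<bullet> (r + q) \<ge> r \<bullet> r" using rq sp_self_ge0[of q] by simp
    ultimately show "vnorm (wh - wg) \<le> vnorm (w - wg)"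
      unfolding vnorm_def r_def[symmetric] by simp
  qed
  show ?thesis using wh_in minimal by blast
qed

end
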